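(* Let $n=n_1+n_2+n_3=m_1+m_2+m_3$ be partitions of $n$ into positive integers, let $G=U(n)$, let $L=U(n_1)\times U(n_2)\times U(n_3)$ and $H=U(m_1)\times U(m_2)\times U(m_3)$ be the natural block-diagonal subgroups of $G$, and let $G'=O(n)$. Then $LG'H\subsetneq G$.
   Context: $LG'H=\{xyz:x\in L,y\in G',z\in H\}$. *)

theory Defs
  imports Complex_Main "Jordan_Normal_Form.Matrix"
begin

definition ctrans :: "complex mat \<Rightarrow> complex mat" where
  "ctrans A = mat (dim_col A) (dim_row A) (\<lambda>(i,j). cnj (A $$ (j,i)))"

definition unitary_group :: "nat \<Rightarrow> complex mat set" where
  "unitary_group n = {U \<in> carrier_mat n n. U * ctrans U = 1\<^sub>m n}"

definition orthogonal_group :: "nat \<Rightarrow> complex mat set" where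
  "orthogonal_group n = {U \<in> carrier_mat n n.
      (\<forall>i<n. \<forall>j<n. U $$ (i,j) \<in> \<real>) \<and> U * transpose_mat U = 1\<^sub>m n}"

definition block3 :: "nat \<Rightarrow> nat \<Rightarrow> nat \<Rightarrow> nat" where
  "block3 a b i = (if i < a then 0 else if i < a + b then 1 else 2)"

definition block_unitary3 :: "nat \<Rightarrow> nat \<Rightarrow> nat \<Rightarrow> complex mat set" where
  "block_unitary3 a b c = {U \<in> unitary_group (a + b + c).
      \<forall>i < a + b + c. \<forall>j < a + b + c. block3 a b i \<noteq> block3 a b j \<longrightarrow> U $$ (i,j) = 0}"

definition set_prod3 :: "complex mat set \<Rightarrow> complex mat set \<Rightarrow> complex mat set \<Rightarrow> complex mat set" where
  "set_prod3 X Y Z = {x * y * z | x y z. x \<in> X \<and> y \<in> Y \<and> z \<in> Z}"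

end

theory Submission
  imports Defs "Jordan_Normal_Form.Determinant"
begin

lemma ctrans_carrier[simp]: "dim_row (ctrans A) = dim_col A" "dim_col (ctrans A) = dim_row A"
  by (auto simp: ctrans_def)

lemma ctrans_index[simp]: "i < dim_col A \<Longrightarrow> j < dim_row A \<Longrightarrow> ctrans A $$ (i,j) = cnj (A $$ (j,i))"
  by (auto simp: ctrans_def)

lemma ctrans_carrier_mat[simp]: "A \<in> carrier_mat a b \<Longrightarrow> ctrans A \<in> carrier_mat b a"
  by (metis carrier_matD carrier_matI ctrans_carrier)

lemma ctrans_mult: assumes "A \<in> carrier_mat a b" "B \<in> carrier_mat b c"
  shows "ctrans (A * B) = ctrans B * ctrans A"
  using assms by (intro eq_matI) (auto simp: scalar_prod_def row_def col_def mult.commute)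

lemma unitaryD: assumes "U \<in> unitary_group n"
  shows "U \<in> carrier_mat n n" "U * ctrans U = 1\<^sub>m n" "ctrans U * U = 1\<^sub>m n"
  using assms mat_mult_left_right_inverse[of U n "ctrans U"] by (auto simp: unitary_group_def)

lemma unitary_mult: assumes "A \<in> unitary_group n" "B \<in> unitary_group n"
  shows "A * B \<in> unitary_group n"
proof -
  note a = unitaryD[OF assms(1)] and b = unitaryD[OF assms(2)]
  have cB: "ctrans B \<in> carrier_mat n n" "ctrans A \<in> carrier_mat n n" using a b by auto
  have "A * B * ctrans (A * B) = A * B * (ctrans B * ctrans A)"
    using a b by (simp add: ctrans_mult[of A n n B n])
  also have "\<dots> = A * (B * (ctrans B * ctrans A))" using a b cB by (metis assoc_mult_mat mult_carrier_mat)
  also have "B * (ctrans B * ctrans A) = (B * ctrans B) * ctrans A" using a b cB by (metis assoc_mult_mat mult_carrier_mat)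
  also have "A * (\<dots>) = 1\<^sub>m n" using a b cB by simp
  finally have "A * B * ctrans (A * B) = 1\<^sub>m n" .
  moreover have "A * B \<in> carrier_mat n n" using a b by (metis mult_carrier_mat)
  ultimately show ?thesis unfolding unitary_group_def by blast
qed

lemma ortho_ctrans: assumes "U \<in> orthogonal_group n" shows "ctrans U = transpose_mat U"
  using assms by (intro eq_matI) (auto simp: orthogonal_group_def Reals_cnj_iff)

lemma ortho_unitary: "U \<in> orthogonal_group n \<Longrightarrow> U \<in> unitary_group n"
  using ortho_ctrans[of U n] by (auto simp: orthogonal_group_def unitary_group_def)

lemma block_unitary: "U \<in> block_unitary3 a b c \<Longrightarrow> U \<in> unitary_group (a+b+c)"
  by (auto simp: block_unitary3_def)

lemma assoc_dim: "dim_col A = dim_row B \<Longrightarrow> dim_col B = dim_row C \<Longrightarrow> A * B * C = A * (B * C)"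
  by (rule assoc_mult_mat[of A "dim_row A" "dim_col A" B "dim_col B" C "dim_col C"]) auto

definition Pm :: "nat \<Rightarrow> nat \<Rightarrow> nat \<Rightarrow> nat \<Rightarrow> complex mat" where
  "Pm n a b k = mat n n (\<lambda>(i,j). if i = j \<and> block3 a b i = k then 1 else 0)"

lemma Pm_dim[simp]: "dim_row (Pm n a b k) = n" "dim_col (Pm n a b k) = n"
  by (auto simp: Pm_def)

lemma Pm_left: assumes "i < n" "j < dim_col M" "dim_row M = n"
  shows "(Pm n a b k * M) $$ (i,j) = (if block3 a b i = k then M $$ (i,j) else 0)"
proof -
  have "(Pm n a b k * M) $$ (i,j) = (\<Sum>t\<in>{0..<n}. (if i = t \<and> block3 a b i = k then 1 else 0) * M $$ (t,j))"
    using assms by (auto simp: scalar_prod_def Pm_def row_def col_def)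
  also have "\<dots> = (\<Sum>t\<in>{0..<n}. (if t = i then (if block3 a b i = k then M $$ (i,j) else 0) else 0))"
    by (rule sum.cong) auto
  also have "\<dots> = (if block3 a b i = k then M $$ (i,j) else 0)" using assms by simp
  finally show ?thesis .
qed

lemma Pm_right: assumes "i < dim_row M" "j < n" "dim_col M = n"
  shows "(M * Pm n a b k) $$ (i,j) = (if block3 a b j = k then M $$ (i,j) else 0)"
proof -
  have "(M * Pm n a b k) $$ (i,j) = (\<Sum>t\<in>{0..<n}. M $$ (i,t) * (if t = j \<and> block3 a b t = k then 1 else 0))"
    using assms by (auto simp: scalar_prod_def Pm_def row_def col_def)
  also have "\<dots> = (\<Sum>t\<in>{0..<n}. (if t = j then (if block3 a b j = k then M $$ (i,j) else 0) else 0))"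
    by (rule sum.cong) auto
  also have "\<dots> = (if block3 a b j = k then M $$ (i,j) else 0)" using assms by simp
  finally show ?thesis .
qed

lemma Pm_comm: assumes "U \<in> block_unitary3 a b c" "n = a + b + c"
  shows "Pm n a b k * U = U * Pm n a b k"
proof -
  have U: "U \<in> carrier_mat n n" using assms by (auto simp: block_unitary3_def unitary_group_def)
  show ?thesis
  proof (rule eq_matI)
    fix i j assume ij: "i < dim_row (U * Pm n a b k)" "j < dim_col (U * Pm n a b k)"
    then have "i < n" "j < n" using U by auto
    have "(Pm n a b k * U) $$ (i, j) = (if block3 a b i = k then U $$ (i,j) else 0)"
      by (rule Pm_left) (use U \<open>i < n\<close> \<open>j < n\<close> in auto)
    moreover have "(U * Pm n a b k) $$ (i, j) = (if block3 a b j = k then U $$ (i,j) else 0)"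
      by (rule Pm_right) (use U \<open>i < n\<close> \<open>j < n\<close> in auto)
    ultimately show "(Pm n a b k * U) $$ (i, j) = (U * Pm n a b k) $$ (i, j)"
      using U assms \<open>i < n\<close> \<open>j < n\<close> by (auto simp: block_unitary3_def)
  qed (use U in auto)
qed

definition tr :: "complex mat \<Rightarrow> complex" where "tr M = (\<Sum>i<dim_row M. M $$ (i,i))"

lemma tr_comm: assumes "A \<in> carrier_mat n m" "B \<in> carrier_mat m n"
  shows "tr (A * B) = tr (B * A)"
proof -
  have "tr (A * B) = (\<Sum>i<n. \<Sum>k<m. A $$ (i,k) * B $$ (k,i))"
    using assms by (auto simp: tr_def scalar_prod_def row_def col_def atLeast0LessThan)
  also have "\<dots> = (\<Sum>k<m. \<Sum>i<n. B $$ (k,i) * A $$ (i,k))"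
    by (subst sum.swap) (simp add: mult.commute)
  also have "\<dots> = tr (B * A)"
    using assms by (auto simp: tr_def scalar_prod_def row_def col_def atLeast0LessThan)
  finally show ?thesis .
qed

definition realm :: "complex mat \<Rightarrow> bool" where
  "realm M = (\<forall>i<dim_row M. \<forall>j<dim_col M. M $$ (i,j) \<in> \<real>)"

lemma realm_mult: "realm A \<Longrightarrow> realm B \<Longrightarrow> dim_col A = dim_row B \<Longrightarrow> realm (A * B)"
  by (auto simp: realm_def scalar_prod_def row_def col_def intro!: sum_in_Reals)

lemma realm_ctrans: "realm A \<Longrightarrow> realm (ctrans A)"
  by (auto simp: realm_def Reals_cnj_iff)

lemma realm_Pm: "realm (Pm n a b k)"
  by (auto simp: realm_def Pm_def)

lemma realm_tr: "realm A \<Longrightarrow> dim_col A = dim_row A \<Longrightarrow> tr A \<in> \<real>"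
  by (auto simp: realm_def tr_def intro!: sum_in_Reals)

lemma ctrans_mult_dim: "dim_col A = dim_row B \<Longrightarrow> ctrans (A * B) = ctrans B * ctrans A"
  by (rule ctrans_mult[of A "dim_row A" "dim_col A" B "dim_col B"]) auto

definition XX :: "nat \<Rightarrow> nat \<Rightarrow> nat \<Rightarrow> nat \<Rightarrow> nat \<Rightarrow> nat \<Rightarrow> nat \<Rightarrow> complex mat \<Rightarrow> complex mat" where
  "XX n n1 n2 m1 m2 a b M = Pm n n1 n2 a * M * Pm n m1 m2 b"

definition finv :: "nat \<Rightarrow> nat \<Rightarrow> nat \<Rightarrow> nat \<Rightarrow> nat \<Rightarrow> complex mat \<Rightarrow> complex" where
  "finv n n1 n2 m1 m2 M = tr (XX n n1 n2 m1 m2 0 0 M * ctrans (XX n n1 n2 m1 m2 2 0 M)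
      * XX n n1 n2 m1 m2 2 2 M * ctrans (XX n n1 n2 m1 m2 0 2 M))"

lemma finv_real: assumes "Om \<in> orthogonal_group n" shows "finv n n1 n2 m1 m2 Om \<in> \<real>"
proof -
  have r: "realm Om" "dim_row Om = n" "dim_col Om = n" using assms by (auto simp: orthogonal_group_def realm_def)
  show ?thesis unfolding finv_def XX_def
    by (intro realm_tr realm_mult realm_ctrans realm_Pm) (auto simp: r)
qed

lemma finv_inv:
  assumes l: "L \<in> block_unitary3 n1 n2 n3" and h: "H \<in> block_unitary3 m1 m2 m3"
    and n: "n = n1 + n2 + n3" "n = m1 + m2 + m3" and Om: "Om \<in> carrier_mat n n"
  shows "finv n n1 n2 m1 m2 (L * Om * H) = finv n n1 n2 m1 m2 Om"
proof -
  have lu: "L \<in> unitary_group n" "H \<in> unitary_group n" using block_unitary[OF l] block_unitary[OF h] n by auto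
  note L = unitaryD[OF lu(1)] and H = unitaryD[OF lu(2)]
  have dims[simp]: "dim_row L = n" "dim_col L = n" "dim_row H = n" "dim_col H = n"
    "dim_row Om = n" "dim_col Om = n" using L H Om by auto
  have PL: "Pm n n1 n2 k * (L * X) = L * (Pm n n1 n2 k * X)" if "dim_row X = n" for k X
  proof -
    have "Pm n n1 n2 k * (L * X) = (Pm n n1 n2 k * L) * X" using that by (simp add: assoc_dim)
    also have "\<dots> = (L * Pm n n1 n2 k) * X" using Pm_comm[OF l n(1)] by simp
    finally show ?thesis using that by (simp add: assoc_dim)
  qed
  have HP: "H * Pm n m1 m2 k = Pm n m1 m2 k * H" for k using Pm_comm[OF h n(2)] by simp
  have HH: "H * (ctrans H * X) = X" if "dim_row X = n" for X
  proof -
    have "H * (ctrans H * X) = (H * ctrans H) * X" using that by (simp add: assoc_dim)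
    then show ?thesis using H that by simp
  qed
  have LL: "ctrans L * (L * X) = X" if "dim_row X = n" for X
  proof -
    have "ctrans L * (L * X) = (ctrans L * L) * X" using that by (simp add: assoc_dim)
    then show ?thesis using L that by simp
  qed
  have X: "XX n n1 n2 m1 m2 a b (L * Om * H) = L * (XX n n1 n2 m1 m2 a b Om * H)" for a b
    unfolding XX_def by (simp add: assoc_dim PL HP)
  define A where "A = XX n n1 n2 m1 m2 0 0 Om"
  define B where "B = XX n n1 n2 m1 m2 2 0 Om"
  define C where "C = XX n n1 n2 m1 m2 2 2 Om"
  define D where "D = XX n n1 n2 m1 m2 0 2 Om"
  have dd[simp]: "dim_row A = n" "dim_col A = n" "dim_row B = n" "dim_col B = n"
    "dim_row C = n" "dim_col C = n" "dim_row D = n" "dim_col D = n"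
    by (auto simp: A_def B_def C_def D_def XX_def)
  have e1: "ctrans (L * (M * H)) = ctrans H * (ctrans M * ctrans L)" if "dim_row M = n" "dim_col M = n" for M
    using that by (simp add: ctrans_mult_dim assoc_dim)
  have "finv n n1 n2 m1 m2 (L * Om * H) = tr (L * (A * H) * (ctrans H * (ctrans B * ctrans L)) * (L * (C * H)) * (ctrans H * (ctrans D * ctrans L)))"
    unfolding finv_def X A_def[symmetric] B_def[symmetric] C_def[symmetric] D_def[symmetric]
    by (simp only: e1 dd)
  also have "\<dots> = tr (L * (A * (H * (ctrans H * (ctrans B * (ctrans L * (L * (C * (H * (ctrans H * (ctrans D * ctrans L)))))))))))"
    by (simp only: assoc_dim index_mult_mat(2,3) ctrans_carrier dims dd)
  also have "\<dots> = tr (L * (A * (ctrans B * (C * (ctrans D * ctrans L)))))"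
    by (simp only: HH LL index_mult_mat(2,3) ctrans_carrier dims dd)
  also have "\<dots> = tr ((A * (ctrans B * (C * (ctrans D * ctrans L)))) * L)"
    by (rule tr_comm[of _ n n]) auto
  also have "\<dots> = finv n n1 n2 m1 m2 Om"
    unfolding finv_def A_def[symmetric] B_def[symmetric] C_def[symmetric] D_def[symmetric]
    using L by (simp add: assoc_dim)
  finally show ?thesis .
qed



definition uu :: "nat \<Rightarrow> nat \<Rightarrow> complex" where
  "uu a b = (if a = 0 then (if b = 0 then Complex (-2/3) (-1/3) else Complex (-1/3) (-1/3))
     else if a = 1 then (if b = 0 then Complex (-1/3) (-1/3) else if b = 1 then Complex (2/3) (1/3) else Complex (-1/3) (1/3))
     else (if b = 0 then Complex (-1/3) (-1/3) else if b = 1 then Complex (-1/3) (1/3) else Complex (2/3) (1/3)))"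

lemma uu_orth: assumes "a < 3" "b < 3"
  shows "uu a 0 * cnj (uu b 0) + uu a 1 * cnj (uu b 1) + uu a 2 * cnj (uu b 2) = (if a = b then 1 else 0)"
proof -
  have "a = 0 \<or> a = 1 \<or> a = 2" "b = 0 \<or> b = 1 \<or> b = 2" using assms by auto
  then show ?thesis by (auto simp: uu_def Complex_simps)
qed

lemma uu_val: "uu 0 0 * cnj (uu 2 0) * (uu 2 2 * cnj (uu 0 2)) = Complex (-8/81) (6/81)"
  by (simp add: uu_def Complex_simps)

lemma uu_val_notreal: "uu 0 0 * cnj (uu 2 0) * (uu 2 2 * cnj (uu 0 2)) \<notin> \<real>"
  unfolding uu_val by (simp add: complex_is_Real_iff)

definition tau :: "nat \<Rightarrow> nat \<Rightarrow> nat \<Rightarrow> nat" where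
  "tau n1 m1 i = (if i = n1 then m1 else if i = m1 then n1 else i)"

definition xe :: "nat \<Rightarrow> nat \<Rightarrow> nat \<Rightarrow> nat \<Rightarrow> nat \<Rightarrow> nat \<Rightarrow> nat \<Rightarrow> complex" where
  "xe n n1 n2 m1 m2 i j = (if i \<in> {0, n1, n - 1} \<and> j \<in> {0, m1, n - 1} then uu (block3 n1 n2 i) (block3 m1 m2 j)
      else if i \<notin> {0, n1, n - 1} \<and> j = tau n1 m1 i then 1 else 0)"

context
  fixes n n1 n2 n3 m1 m2 m3 :: nat
  assumes pos: "n1 > 0" "n2 > 0" "n3 > 0" "m1 > 0" "m2 > 0" "m3 > 0"
    and nn: "n = n1 + n2 + n3" "n = m1 + m2 + m3"
begin

lemma bl: "block3 n1 n2 0 = 0" "block3 n1 n2 n1 = 1" "block3 n1 n2 (n - 1) = 2"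
  "block3 m1 m2 0 = 0" "block3 m1 m2 m1 = 1" "block3 m1 m2 (n - 1) = 2"
  using pos nn by (auto simp: block3_def)

lemma ineq: "0 < n1" "n1 < n - 1" "0 < m1" "m1 < n - 1" "0 < n"
  using pos nn by auto

lemma tau_props: "tau n1 m1 (tau n1 m1 i) = i" "i \<notin> {0, n1, n - 1} \<Longrightarrow> tau n1 m1 i \<notin> {0, m1, n - 1}"
  "i < n \<Longrightarrow> tau n1 m1 i < n"
  using ineq by (auto simp: tau_def)

lemma xe_R: "i \<in> {0, n1, n - 1} \<Longrightarrow> xe n n1 n2 m1 m2 i k = (if k \<in> {0, m1, n - 1} then uu (block3 n1 n2 i) (block3 m1 m2 k) else 0)"
  by (auto simp: xe_def)

lemma xe_nR: "i \<notin> {0, n1, n - 1} \<Longrightarrow> xe n n1 n2 m1 m2 i k = (if k = tau n1 m1 i then 1 else 0)"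
  using tau_props(2)[of i] by (auto simp: xe_def)

lemma sumC: "(\<Sum>k\<in>{0..<n}. (if k \<in> {0, m1, n - 1} then f k else 0)) = f 0 + f m1 + f (n - 1)"
proof -
  have "(\<Sum>k\<in>{0..<n}. (if k \<in> {0, m1, n - 1} then f k else 0)) = (\<Sum>k\<in>{0..<n} \<inter> {0, m1, n - 1}. f k)"
    by (rule sum.inter_restrict[symmetric]) auto
  also have "{0..<n} \<inter> {0, m1, n - 1} = {0, m1, n - 1}" using ineq by auto
  also have "(\<Sum>k\<in>{0, m1, n - 1}. f k) = f 0 + f m1 + f (n - 1)" using ineq by (simp add: add.assoc)
  finally show ?thesis .
qed

lemma xe_rows: assumes "i < n" "j < n"
  shows "(\<Sum>k\<in>{0..<n}. xe n n1 n2 m1 m2 i k * cnj (xe n n1 n2 m1 m2 j k)) = (if i = j then 1 else 0)"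
proof (cases "i \<in> {0, n1, n - 1}")
  case iR: True
  show ?thesis
  proof (cases "j \<in> {0, n1, n - 1}")
    case jR: True
    have "(\<Sum>k\<in>{0..<n}. xe n n1 n2 m1 m2 i k * cnj (xe n n1 n2 m1 m2 j k)) =
      (\<Sum>k\<in>{0..<n}. (if k \<in> {0, m1, n - 1} then uu (block3 n1 n2 i) (block3 m1 m2 k) * cnj (uu (block3 n1 n2 j) (block3 m1 m2 k)) else 0))"
      by (rule sum.cong) (auto simp: xe_R[OF iR] xe_R[OF jR])
    also have "\<dots> = (if block3 n1 n2 i = block3 n1 n2 j then 1 else 0)"
      unfolding sumC bl by (rule uu_orth) (auto simp: block3_def)
    also have "\<dots> = (if i = j then 1 else 0)" using iR jR bl ineq by auto
    finally show ?thesis .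
  next
    case jR: False
    have "(\<Sum>k\<in>{0..<n}. xe n n1 n2 m1 m2 i k * cnj (xe n n1 n2 m1 m2 j k)) = (\<Sum>k\<in>{0..<n}. 0)"
      by (rule sum.cong) (use tau_props(2)[OF jR] in \<open>auto simp: xe_R[OF iR] xe_nR[OF jR]\<close>)
    then show ?thesis using iR jR by auto
  qed
next
  case iR: False
  show ?thesis
  proof (cases "j \<in> {0, n1, n - 1}")
    case jR: True
    have "(\<Sum>k\<in>{0..<n}. xe n n1 n2 m1 m2 i k * cnj (xe n n1 n2 m1 m2 j k)) = (\<Sum>k\<in>{0..<n}. 0)"
      by (rule sum.cong) (use tau_props(2)[OF iR] in \<open>auto simp: xe_R[OF jR] xe_nR[OF iR]\<close>)
    then show ?thesis using iR jR by auto
  next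
    case jR: False
    have "(\<Sum>k\<in>{0..<n}. xe n n1 n2 m1 m2 i k * cnj (xe n n1 n2 m1 m2 j k)) =
       (\<Sum>k\<in>{0..<n}. if k = tau n1 m1 i then (if i = j then 1 else 0) else 0)"
      by (rule sum.cong) (use tau_props(1)[of i] tau_props(1)[of j] in \<open>auto simp: xe_nR[OF jR] xe_nR[OF iR]\<close>)
    then show ?thesis using tau_props(3)[OF assms(1)] by simp
  qed
qed

definition xm :: "complex mat" where "xm = mat n n (\<lambda>(i,j). xe n n1 n2 m1 m2 i j)"

lemma xm_unitary: "xm \<in> unitary_group n"
proof -
  have "xm * ctrans xm = 1\<^sub>m n"
  proof (rule eq_matI)
    fix i j assume "i < dim_row (1\<^sub>m n :: complex mat)" "j < dim_col (1\<^sub>m n :: complex mat)"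
    then have ij: "i < n" "j < n" by auto
    have "(xm * ctrans xm) $$ (i,j) = (\<Sum>k\<in>{0..<n}. xe n n1 n2 m1 m2 i k * cnj (xe n n1 n2 m1 m2 j k))"
      using ij unfolding xm_def by (simp add: scalar_prod_def)
    then show "(xm * ctrans xm) $$ (i,j) = 1\<^sub>m n $$ (i,j)" using ij xe_rows by simp
  qed (simp_all add: xm_def)
  moreover have "xm \<in> carrier_mat n n" unfolding xm_def by simp
  ultimately show ?thesis unfolding unitary_group_def by blast
qed


lemma xm_idx: "i < n \<Longrightarrow> j < n \<Longrightarrow> xm $$ (i,j) = xe n n1 n2 m1 m2 i j"
  by (simp add: xm_def)

lemma xm_dim[simp]: "dim_row xm = n" "dim_col xm = n" by (simp_all add: xm_def)

lemma XX_dim[simp]: "dim_row (XX n n1 n2 m1 m2 a b M) = n" "dim_col (XX n n1 n2 m1 m2 a b M) = n"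
  by (simp_all add: XX_def)

lemma XXe: assumes "i < n" "j < n"
  shows "XX n n1 n2 m1 m2 a b xm $$ (i,j) = (if block3 n1 n2 i = a \<and> block3 m1 m2 j = b then xe n n1 n2 m1 m2 i j else 0)"
proof -
  have "XX n n1 n2 m1 m2 a b xm $$ (i,j) = (if block3 m1 m2 j = b then (Pm n n1 n2 a * xm) $$ (i,j) else 0)"
    unfolding XX_def by (rule Pm_right) (use assms in simp_all)
  also have "(Pm n n1 n2 a * xm) $$ (i,j) = (if block3 n1 n2 i = a then xm $$ (i,j) else 0)"
    by (rule Pm_left) (use assms in simp_all)
  finally show ?thesis using assms xm_idx by auto
qed

lemma prod_ct: assumes "dim_row A = n" "dim_col A = n" "dim_row B = n" "dim_col B = n" "i < n" "j < n"
  shows "(A * ctrans B) $$ (i,j) = (\<Sum>k\<in>{0..<n}. A $$ (i,k) * cnj (B $$ (j,k)))"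
  using assms by (simp add: scalar_prod_def)

lemma xe_nz: "xe n n1 n2 m1 m2 i k \<noteq> 0 \<Longrightarrow> (i \<in> {0, n1, n - 1} \<and> k \<in> {0, m1, n - 1}) \<or> (i \<notin> {0, n1, n - 1} \<and> k = tau n1 m1 i)"
  unfolding xe_def by (auto split: if_splits)

lemma Yg: assumes ac: "a \<noteq> c" and ii: "ii \<in> {0, n1, n - 1}" "block3 n1 n2 ii = a"
    and jj: "jj \<in> {0, n1, n - 1}" "block3 n1 n2 jj = c"
    and kk: "kk \<in> {0, m1, n - 1}" "block3 m1 m2 kk = b"
    and ui: "\<And>i. i \<in> {0, n1, n - 1} \<Longrightarrow> block3 n1 n2 i = a \<Longrightarrow> i = ii"
    and uj: "\<And>j. j \<in> {0, n1, n - 1} \<Longrightarrow> block3 n1 n2 j = c \<Longrightarrow> j = jj"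
    and uk: "\<And>k. k \<in> {0, m1, n - 1} \<Longrightarrow> block3 m1 m2 k = b \<Longrightarrow> k = kk"
    and ij: "i < n" "j < n"
  shows "(XX n n1 n2 m1 m2 a b xm * ctrans (XX n n1 n2 m1 m2 c b xm)) $$ (i,j)
     = (if i = ii \<and> j = jj then uu a b * cnj (uu c b) else 0)"
proof -
  define g where "g k = XX n n1 n2 m1 m2 a b xm $$ (i,k) * cnj (XX n n1 n2 m1 m2 c b xm $$ (j,k))" for k
  have kkn: "kk < n" using kk ineq by auto
  have "(XX n n1 n2 m1 m2 a b xm * ctrans (XX n n1 n2 m1 m2 c b xm)) $$ (i,j) = (\<Sum>k\<in>{0..<n}. g k)"
    unfolding g_def by (rule prod_ct) (use ij in simp_all)
  also have "\<dots> = (\<Sum>k\<in>{0..<n}. if k = kk then (if i = ii \<and> j = jj then uu a b * cnj (uu c b) else 0) else 0)"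
  proof (rule sum.cong)
    fix k assume "k \<in> {0..<n}"
    then have kn: "k < n" by simp
    have gk: "g k = (if block3 n1 n2 i = a \<and> block3 m1 m2 k = b then xe n n1 n2 m1 m2 i k else 0)
       * cnj (if block3 n1 n2 j = c \<and> block3 m1 m2 k = b then xe n n1 n2 m1 m2 j k else 0)"
      unfolding g_def using XXe[OF ij(1) kn] XXe[OF ij(2) kn] by simp
    show "g k = (if k = kk then (if i = ii \<and> j = jj then uu a b * cnj (uu c b) else 0) else 0)"
    proof (cases "g k = 0")
      case True
      have "\<not> (k = kk \<and> i = ii \<and> j = jj)"
      proof
        assume h: "k = kk \<and> i = ii \<and> j = jj"
        then have "g k = uu a b * cnj (uu c b)" using gk ii jj kk by (simp add: xe_R)
        moreover have "uu a b \<noteq> 0" "uu c b \<noteq> 0" by (auto simp: uu_def Complex_eq_0)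
        ultimately show False using True by simp
      qed
      then show ?thesis using True by auto
    next
      case False
      then have A: "block3 n1 n2 i = a" "block3 m1 m2 k = b" "xe n n1 n2 m1 m2 i k \<noteq> 0"
        and B: "block3 n1 n2 j = c" "xe n n1 n2 m1 m2 j k \<noteq> 0"
        using gk by (auto split: if_splits)
      have "k = kk \<and> i = ii \<and> j = jj"
      proof (cases "i \<in> {0, n1, n - 1}")
        case True
        then have kC: "k \<in> {0, m1, n - 1}" using xe_nz[OF A(3)] by auto
        have jR: "j \<in> {0, n1, n - 1}"
          using xe_nz[OF B(2)] tau_props(2)[of j] kC by auto
        show ?thesis using ui[OF True A(1)] uk[OF kC A(2)] uj[OF jR B(1)] by simp
      next
        case False
        then have kk: "k = tau n1 m1 i" using xe_nz[OF A(3)] by auto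
        have jR: "j \<notin> {0, n1, n - 1}"
          using xe_nz[OF B(2)] tau_props(2)[OF False] kk by auto
        then have "k = tau n1 m1 j" using xe_nz[OF B(2)] by auto
        then have "i = j" using kk tau_props(1)[of i] tau_props(1)[of j] by metis
        then show ?thesis using A(1) B(1) ac by simp
      qed
      then show ?thesis using gk ii jj kk by (simp add: xe_R)
    qed
  qed simp
  also have "\<dots> = (if i = ii \<and> j = jj then uu a b * cnj (uu c b) else 0)"
    using kkn by simp
  finally show ?thesis .
qed

lemma RA: "i \<in> {0, n1, n - 1} \<Longrightarrow> block3 n1 n2 i = 0 \<Longrightarrow> i = 0"
  "i \<in> {0, n1, n - 1} \<Longrightarrow> block3 n1 n2 i = 2 \<Longrightarrow> i = n - 1"
  "i \<in> {0, m1, n - 1} \<Longrightarrow> block3 m1 m2 i = 0 \<Longrightarrow> i = 0"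
  "i \<in> {0, m1, n - 1} \<Longrightarrow> block3 m1 m2 i = 2 \<Longrightarrow> i = n - 1"
  using bl by auto

lemma Y1: "i < n \<Longrightarrow> j < n \<Longrightarrow> (XX n n1 n2 m1 m2 0 0 xm * ctrans (XX n n1 n2 m1 m2 2 0 xm)) $$ (i,j)
     = (if i = 0 \<and> j = n - 1 then uu 0 0 * cnj (uu 2 0) else 0)"
  by (rule Yg[where kk=0]) (use bl in \<open>auto dest: RA\<close>)

lemma Y2: "i < n \<Longrightarrow> j < n \<Longrightarrow> (XX n n1 n2 m1 m2 2 2 xm * ctrans (XX n n1 n2 m1 m2 0 2 xm)) $$ (i,j)
     = (if i = n - 1 \<and> j = 0 then uu 2 2 * cnj (uu 0 2) else 0)"
  by (rule Yg[where kk="n - 1"]) (use bl in \<open>auto dest: RA\<close>)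

lemma finv_xm: "finv n n1 n2 m1 m2 xm = uu 0 0 * cnj (uu 2 0) * (uu 2 2 * cnj (uu 0 2))"
proof -
  define Y where "Y = XX n n1 n2 m1 m2 0 0 xm * ctrans (XX n n1 n2 m1 m2 2 0 xm)"
  define Z where "Z = XX n n1 n2 m1 m2 2 2 xm * ctrans (XX n n1 n2 m1 m2 0 2 xm)"
  have "finv n n1 n2 m1 m2 xm = tr (Y * Z)"
    unfolding finv_def Y_def Z_def by (simp add: assoc_dim)
  also have "\<dots> = (\<Sum>i<n. \<Sum>k\<in>{0..<n}. Y $$ (i,k) * Z $$ (k,i))"
    unfolding tr_def by (simp add: Y_def Z_def scalar_prod_def)
  also have "\<dots> = (\<Sum>i<n. if i = 0 then uu 0 0 * cnj (uu 2 0) * (uu 2 2 * cnj (uu 0 2)) else 0)"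
  proof (rule sum.cong)
    fix i assume "i \<in> {..<n}"
    then have i: "i < n" by simp
    have "(\<Sum>k\<in>{0..<n}. Y $$ (i,k) * Z $$ (k,i)) =
      (\<Sum>k\<in>{0..<n}. if k = n - 1 then (if i = 0 then uu 0 0 * cnj (uu 2 0) * (uu 2 2 * cnj (uu 0 2)) else 0) else 0)"
      by (rule sum.cong) (use i in \<open>auto simp: Y1[folded Y_def] Y2[folded Z_def]\<close>)
    also have "\<dots> = (if i = 0 then uu 0 0 * cnj (uu 2 0) * (uu 2 2 * cnj (uu 0 2)) else 0)"
      using ineq by simp
    finally show "(\<Sum>k\<in>{0..<n}. Y $$ (i,k) * Z $$ (k,i)) = (if i = 0 then uu 0 0 * cnj (uu 2 0) * (uu 2 2 * cnj (uu 0 2)) else 0)" .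
  qed simp
  also have "\<dots> = uu 0 0 * cnj (uu 2 0) * (uu 2 2 * cnj (uu 0 2))" using ineq by simp
  finally show ?thesis .
qed

lemma exists_bad: "\<exists>x. x \<in> unitary_group n \<and> finv n n1 n2 m1 m2 x \<notin> \<real>"
  using xm_unitary finv_xm uu_val_notreal by metis

end


theorem proposition6p4:
  fixes n n1 n2 n3 m1 m2 m3 :: nat
  assumes "n1 > 0" "n2 > 0" "n3 > 0" "m1 > 0" "m2 > 0" "m3 > 0"
    and "n = n1 + n2 + n3" and "n = m1 + m2 + m3"
  shows "set_prod3 (block_unitary3 n1 n2 n3) (orthogonal_group n) (block_unitary3 m1 m2 m3)
           \<subset> unitary_group n"
proof -
  have sub: "set_prod3 (block_unitary3 n1 n2 n3) (orthogonal_group n) (block_unitary3 m1 m2 m3)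
           \<subseteq> unitary_group n"
  proof
    fix x assume "x \<in> set_prod3 (block_unitary3 n1 n2 n3) (orthogonal_group n) (block_unitary3 m1 m2 m3)"
    then obtain l q h where lqh: "x = l * q * h" "l \<in> block_unitary3 n1 n2 n3" "q \<in> orthogonal_group n"
      "h \<in> block_unitary3 m1 m2 m3" unfolding set_prod3_def by blast
    have "l \<in> unitary_group n" using block_unitary[OF lqh(2)] assms(7) by simp
    moreover have "h \<in> unitary_group n" using block_unitary[OF lqh(4)] assms(8) by simp
    moreover have "q \<in> unitary_group n" using ortho_unitary[OF lqh(3)] .
    ultimately show "x \<in> unitary_group n" using lqh(1) unitary_mult by metis
  qed
  obtain x where x: "x \<in> unitary_group n" "finv n n1 n2 m1 m2 x \<notin> \<real>"
    using exists_bad[OF assms] by blast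
  have "x \<notin> set_prod3 (block_unitary3 n1 n2 n3) (orthogonal_group n) (block_unitary3 m1 m2 m3)"
  proof
    assume "x \<in> set_prod3 (block_unitary3 n1 n2 n3) (orthogonal_group n) (block_unitary3 m1 m2 m3)"
    then obtain l q h where lqh: "x = l * q * h" "l \<in> block_unitary3 n1 n2 n3" "q \<in> orthogonal_group n"
      "h \<in> block_unitary3 m1 m2 m3" unfolding set_prod3_def by blast
    have qc: "q \<in> carrier_mat n n" using lqh(3) by (simp add: orthogonal_group_def)
    have "finv n n1 n2 m1 m2 x = finv n n1 n2 m1 m2 q"
      using finv_inv[OF lqh(2) lqh(4) assms(7) assms(8) qc] lqh(1) by simp
    then show False using finv_real[OF lqh(3)] x(2) by simp
  qed
  then show ?thesis using sub x(1) by blast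
qed

end
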